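(* Let $\mathcal{P}$ be a finite corpus of programs, let $S$ be the (finite) set of complete abstractions whose size does not exceed the size of the largest program in $\mathcal{P}$, and let $U$ be any real-valued utility function on complete abstractions. Run the naïve top-down search over $S$ augmented with strict dominance pruning, i.e. at any step the search may discard a popped partial abstraction $\hat A'$ instead of expanding it, provided that there exists some partial abstraction $\hat A''$ that strictly dominates $\hat A'$ (whether or not $\hat A''$ has itself been enumerated or pruned). Then the search finds an optimal abstraction, i.e. a complete abstraction $A^\ast\in S$ with $U(A^\ast)\ge U(A)$ for all $A\in S$.
   Context: Programs are closed untyped lambda-calculus terms with de Bruijn indices: $e ::= \lambda.\,e \mid (e\ e) \mid \$i \mid t$, where $\$i$ refers to the variable bound by the $i$-th closest enclosing $\lambda$ and $t$ ranges over a fixed set of primitive symbols. A (complete) abstraction is a term of the grammar $A ::= \lambda.\,A \mid (A\ A) \mid \$i \mid t \mid \alpha$, where $\alpha,\beta,\dots$ are abstraction variables (it represents the body of a function taking the abstraction variables as arguments). A partial abstraction additionally may contain holes $??$: $\hat A ::= A \mid ?? \mid \lambda.\,\hat A \mid (\hat A\ \hat A)$, each hole carrying a unique index. An expansion $\hat A\to\hat A'$ replaces one hole of $\hat A$ by one production of the partial-abstraction grammar ($\lambda.\,??$, $(??\ ??)$ with fresh holes, some $\$i$, some primitive $t$, or an abstraction variable, new or already present). $\hat A\to^\ast A$ ("$A$ is derivable from $\hat A$") denotes the reflexive–transitive closure of expansion; every abstraction is derivable from $??$. The naïve search keeps a queue initialized with the single partial abstraction $??$; at each step it pops a partial abstraction,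 chooses a hole, and expands it in every possible way, pushing resulting partial abstractions onto the queue and, for resulting complete abstractions, computing their utility and updating the best abstraction found so far; it never produces abstractions larger than the largest program in $\mathcal{P}$, so without pruning it enumerates each element of $S$ exactly once. A complete abstraction $A''$ covers a complete abstraction $A'$ if $U(A'')>U(A')$. A partial abstraction $\hat A''$ strictly dominates a partial abstraction $\hat A'$ if for every complete $A'$ with $\hat A'\to^\ast A'$ there exists a complete $A''$ with $\hat A''\to^\ast A''$ such that $A''$ covers $A'$ (abstractions ranging over $S$). *)

theory Defs
  imports Complex_Main
begin

datatype 'p prog = PLam "'p prog" | PApp "'p prog" "'p prog" | PVar nat | PPrim 'p

fun prog_size :: "'p prog \<Rightarrow> nat" where
  "prog_size (PLam e) = Suc (prog_size e)"
| "prog_size (PApp a b) = Suc (prog_size a + prog_size b)"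
| "prog_size (PVar i) = 1"
| "prog_size (PPrim t) = 1"

fun prog_closed_at :: "nat \<Rightarrow> 'p prog \<Rightarrow> bool" where
  "prog_closed_at d (PLam e) = prog_closed_at (Suc d) e"
| "prog_closed_at d (PApp a b) = (prog_closed_at d a \<and> prog_closed_at d b)"
| "prog_closed_at d (PVar i) = (i < d)"
| "prog_closed_at d (PPrim t) = True"

fun prog_prims :: "'p prog \<Rightarrow> 'p set" where
  "prog_prims (PLam e) = prog_prims e"
| "prog_prims (PApp a b) = prog_prims a \<union> prog_prims b"
| "prog_prims (PVar i) = {}"
| "prog_prims (PPrim t) = {t}"

datatype 'p pabs = Lam "'p pabs" | App "'p pabs" "'p pabs" | Var nat | Prim 'p
  | AVar nat
  | Hole      \<comment> \<open>hole ??, identified by its position\<close>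

fun asize :: "'p pabs \<Rightarrow> nat" where
  "asize (Lam e) = Suc (asize e)"
| "asize (App a b) = Suc (asize a + asize b)"
| "asize (Var i) = 1"
| "asize (Prim t) = 1"
| "asize (AVar k) = 1"
| "asize Hole = 1"

fun complete :: "'p pabs \<Rightarrow> bool" where
  "complete (Lam e) = complete e"
| "complete (App a b) = (complete a \<and> complete b)"
| "complete Hole = False"
| "complete _ = True"

fun avars :: "'p pabs \<Rightarrow> nat set" where
  "avars (Lam e) = avars e"
| "avars (App a b) = avars a \<union> avars b"
| "avars (AVar k) = {k}"
| "avars _ = {}"

fun rename :: "(nat \<Rightarrow> nat) \<Rightarrow> 'p pabs \<Rightarrow> 'p pabs" where
  "rename \<sigma> (Lam e) = Lam (rename \<sigma> e)"
| "rename \<sigma> (App a b) = App (rename \<sigma> a) (rename \<sigma> b)"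
| "rename \<sigma> (AVar k) = AVar (\<sigma> k)"
| "rename \<sigma> e = e"

definition fresh :: "'p pabs \<Rightarrow> nat" where
  "fresh A = (LEAST k. k \<notin> avars A)"

inductive hole_pos :: "'p pabs \<Rightarrow> nat list \<Rightarrow> nat \<Rightarrow> bool" where
  "hole_pos Hole [] 0"
| "hole_pos e p d \<Longrightarrow> hole_pos (Lam e) (0 # p) (Suc d)"
| "hole_pos a p d \<Longrightarrow> hole_pos (App a b) (0 # p) d"
| "hole_pos b p d \<Longrightarrow> hole_pos (App a b) (Suc 0 # p) d"

fun subst_at :: "nat list \<Rightarrow> 'p pabs \<Rightarrow> 'p pabs \<Rightarrow> 'p pabs" where
  "subst_at [] r e = r"
| "subst_at (0 # ps) r (Lam e) = Lam (subst_at ps r e)"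
| "subst_at (0 # ps) r (App a b) = App (subst_at ps r a) b"
| "subst_at (Suc 0 # ps) r (App a b) = App a (subst_at ps r b)"
| "subst_at _ r e = e"

definition productions :: "'p set \<Rightarrow> 'p pabs \<Rightarrow> nat \<Rightarrow> 'p pabs set" where
  "productions T A d =
     {Lam Hole, App Hole Hole} \<union> Var ` {..<d} \<union> Prim ` T
     \<union> AVar ` (insert (fresh A) (avars A))"

definition expansions :: "'p set \<Rightarrow> 'p pabs \<Rightarrow> nat list \<Rightarrow> 'p pabs set" where
  "expansions T A p = {subst_at p r A | r d. hole_pos A p d \<and> r \<in> productions T A d}"

definition expand :: "'p set \<Rightarrow> 'p pabs \<Rightarrow> 'p pabs \<Rightarrow> bool" where
  "expand T A A' \<longleftrightarrow> (\<exists>p. A' \<in> expansions T A p)"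

abbreviation derivable :: "'p set \<Rightarrow> 'p pabs \<Rightarrow> 'p pabs \<Rightarrow> bool" where
  "derivable T A A' \<equiv> (expand T)\<^sup>*\<^sup>* A A'"

definition search_space :: "'p set \<Rightarrow> nat \<Rightarrow> 'p pabs set" where
  "search_space T bound = {A. derivable T Hole A \<and> complete A \<and> asize A \<le> bound}"

definition covers :: "('p pabs \<Rightarrow> real) \<Rightarrow> 'p pabs \<Rightarrow> 'p pabs \<Rightarrow> bool" where
  "covers U A'' A' \<longleftrightarrow> U A'' > U A'"

definition strictly_dominates ::
  "'p set \<Rightarrow> nat \<Rightarrow> ('p pabs \<Rightarrow> real) \<Rightarrow> 'p pabs \<Rightarrow> 'p pabs \<Rightarrow> bool" where
  "strictly_dominates T bound U B A \<longleftrightarrow>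
     (\<forall>A' \<in> search_space T bound. derivable T A A' \<longrightarrow>
        (\<exists>A'' \<in> search_space T bound. derivable T B A'' \<and> covers U A'' A'))"

definition is_best :: "('p pabs \<Rightarrow> real) \<Rightarrow> 'p pabs set \<Rightarrow> 'p pabs option \<Rightarrow> bool" where
  "is_best U C b \<longleftrightarrow> (C = {} \<and> b = None) \<or> (\<exists>x. b = Some x \<and> x \<in> C \<and> (\<forall>y\<in>C. U y \<le> U x))"

text \<open>One step of the naive top-down search with strict dominance pruning.
  State: (queue, best abstraction found so far).\<close>
inductive search_step ::
  "'p set \<Rightarrow> nat \<Rightarrow> ('p pabs \<Rightarrow> real) \<Rightarrow>
   'p pabs list \<times> 'p pabs option \<Rightarrow> 'p pabs list \<times> 'p pabs option \<Rightarrow> bool"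
  for T bound U where
  expand_step:
    "\<lbrakk> hole_pos A p d;
       distinct xs;
       set xs = {A' \<in> expansions T A p. \<not> complete A' \<and> asize A' \<le> bound};
       is_best U (set_option b \<union> {A' \<in> expansions T A p. complete A' \<and> asize A' \<le> bound}) b' \<rbrakk>
     \<Longrightarrow> search_step T bound U (A # Q, b) (Q @ xs, b')"
| prune_step:
    "strictly_dominates T bound U B A
     \<Longrightarrow> search_step T bound U (A # Q, b) (Q, b)"

end

theory Submission
  imports Defs
begin

fun valid :: "'p set \<Rightarrow> nat \<Rightarrow> 'p pabs \<Rightarrow> bool" where
  "valid T d (Lam e) = valid T (Suc d) e"
| "valid T d (App a b) = (valid T d a \<and> valid T d b)"
| "valid T d (Var i) = (i < d)"
| "valid T d (Prim t) = (t \<in> T)"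
| "valid T d (AVar k) = True"
| "valid T d Hole = True"

inductive extd :: "'p set \<Rightarrow> nat \<Rightarrow> 'p pabs \<Rightarrow> 'p pabs \<Rightarrow> bool" for T where
  extd_Hole: "valid T c B \<Longrightarrow> extd T c Hole B"
| extd_Lam: "extd T (Suc c) a b \<Longrightarrow> extd T c (Lam a) (Lam b)"
| extd_App: "extd T c a1 b1 \<Longrightarrow> extd T c a2 b2 \<Longrightarrow> extd T c (App a1 a2) (App b1 b2)"
| extd_Var: "extd T c (Var i) (Var i)"
| extd_Prim: "extd T c (Prim t) (Prim t)"
| extd_AVar: "extd T c (AVar k) (AVar k)"

inductive_cases extd_LamE: "extd T c (Lam a) B"
inductive_cases extd_AppE: "extd T c (App a1 a2) B"
inductive_cases extd_VarE: "extd T c (Var i) B"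
inductive_cases extd_PrimE: "extd T c (Prim t) B"
inductive_cases extd_AVarE: "extd T c (AVar k) B"

inductive_cases hp_HoleE: "hole_pos Hole p d"
inductive_cases hp_LamE: "hole_pos (Lam e) p d"
inductive_cases hp_AppE: "hole_pos (App a b) p d"
inductive_cases hp_VarE: "hole_pos (Var i) p d"
inductive_cases hp_PrimE: "hole_pos (Prim t) p d"
inductive_cases hp_AVarE: "hole_pos (AVar k) p d"

lemma extd_refl: "extd T c A A"
  by (induction A arbitrary: c) (auto intro: extd.intros)

lemma extd_valid: "extd T c B C \<Longrightarrow> valid T c B \<Longrightarrow> valid T c C"
  by (induction rule: extd.induct) auto

lemma extd_trans: "extd T c A B \<Longrightarrow> extd T c B C \<Longrightarrow> extd T c A C"
proof (induction arbitrary: C rule: extd.induct)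
  case (extd_Hole c B)
  then show ?case using extd_valid extd.extd_Hole by blast
next
  case (extd_Lam c a b)
  then show ?case by (auto elim!: extd_LamE intro: extd.intros)
next
  case (extd_App c a1 b1 a2 b2)
  then show ?case by (auto elim!: extd_AppE intro: extd.intros)
qed auto

lemma subst_extd: "hole_pos A p d \<Longrightarrow> valid T (c+d) r \<Longrightarrow> extd T c A (subst_at p r A)"
proof (induction arbitrary: c rule: hole_pos.induct)
  case 1 then show ?case by (auto intro: extd.intros)
next
  case (2 e p d) then show ?case by (auto intro!: extd.intros)
next
  case (3 a p d b) then show ?case by (auto intro!: extd.intros extd_refl)
next
  case (4 b p d a) then show ?case by (auto intro!: extd.intros extd_refl)
qed

lemma avars_subst: "hole_pos A p d \<Longrightarrow> avars (subst_at p r A) = avars A \<union> avars r"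
  by (induction rule: hole_pos.induct) auto

lemma asize_subst: "hole_pos A p d \<Longrightarrow> asize (subst_at p r A) + 1 = asize A + asize r"
  by (induction rule: hole_pos.induct) auto

lemma complete_no_hole: "hole_pos A p d \<Longrightarrow> \<not> complete A"
  by (induction rule: hole_pos.induct) auto

lemma finite_avars: "finite (avars A)"
  by (induction A) auto

definition newok :: "nat set \<Rightarrow> nat set \<Rightarrow> bool" where
  "newok X Y \<longleftrightarrow> X \<subseteq> Y \<and> (\<forall>k\<in>Y. \<forall>j<k. k \<notin> X \<longrightarrow> j \<notin> X \<longrightarrow> j \<in> Y)"

lemma newok_refl: "newok X X" unfolding newok_def by auto

lemma newok_trans: "newok X Y \<Longrightarrow> newok Y Z \<Longrightarrow> newok X Z"
  unfolding newok_def by blast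

lemma fresh_notin: "fresh A \<notin> avars A"
proof -
  obtain k where "k \<notin> avars A" using finite_avars infinite_UNIV_nat
    by (metis ex_new_if_finite)
  then show ?thesis unfolding fresh_def by (rule LeastI)
qed

lemma below_fresh: "j < fresh A \<Longrightarrow> j \<in> avars A"
  unfolding fresh_def using not_less_Least by blast

lemma newok_small: "X = avars A \<Longrightarrow> X \<subseteq> Y \<Longrightarrow> Y \<subseteq> insert (fresh A) X \<Longrightarrow> newok X Y"
  unfolding newok_def using below_fresh by blast

lemma fresh_in: "newok (avars A) Y \<Longrightarrow> k \<in> Y \<Longrightarrow> k \<notin> avars A \<Longrightarrow> fresh A \<in> Y"
proof -
  assume a: "newok (avars A) Y" "k \<in> Y" "k \<notin> avars A"
  have "fresh A \<le> k" unfolding fresh_def using a(3) by (rule Least_le)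
  then show ?thesis using a fresh_notin[of A] unfolding newok_def
    by (cases "fresh A = k") auto
qed

lemma newok_insert: "newok X Y \<Longrightarrow> f \<in> Y \<Longrightarrow> newok (insert f X) Y"
  unfolding newok_def by auto


lemma prod_valid: "r \<in> productions T A d \<Longrightarrow> valid T d r"
  unfolding productions_def by auto

lemma prod_avars: "r \<in> productions T A d \<Longrightarrow> avars r \<subseteq> insert (fresh A) (avars A)"
  unfolding productions_def by auto

lemma soundness: "derivable T A B \<Longrightarrow> extd T 0 A B \<and> newok (avars A) (avars B)"
proof (induction rule: rtranclp_induct)
  case base
  then show ?case using extd_refl newok_refl by blast
next
  case (step B C)
  from step(2) obtain p d r where h: "hole_pos B p d" "r \<in> productions T B d"
    "C = subst_at p r B"
    unfolding expand_def expansions_def by blast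
  have "extd T 0 B C" using h subst_extd[of B p d T 0 r] prod_valid by auto
  moreover have "newok (avars B) (avars C)"
    using h avars_subst[OF h(1)] prod_avars[OF h(2)] by (intro newok_small) auto
  ultimately show ?case using step(3) extd_trans newok_trans by blast
qed


fun diffs :: "'p pabs \<Rightarrow> 'p pabs \<Rightarrow> (nat list \<times> nat \<times> 'p pabs) list" where
  "diffs Hole B = (if B = Hole then [] else [([], 0, B)])"
| "diffs (Lam a) (Lam b) = map (\<lambda>(p,d,s). (0#p, Suc d, s)) (diffs a b)"
| "diffs (App a1 a2) (App b1 b2) = map (\<lambda>(p,d,s). (0#p, d, s)) (diffs a1 b1)
     @ map (\<lambda>(p,d,s). (Suc 0#p, d, s)) (diffs a2 b2)"
| "diffs _ _ = []"

fun nh :: "'p pabs \<Rightarrow> nat" where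
  "nh Hole = 0"
| "nh (Lam e) = Suc (nh e)"
| "nh (App a b) = Suc (nh a + nh b)"
| "nh _ = 1"

lemma D1: "extd T c A B \<Longrightarrow> (p,d,s) \<in> set (diffs A B) \<Longrightarrow> hole_pos A p d \<and> valid T (c+d) s \<and> s \<noteq> Hole"
proof (induction arbitrary: p d s rule: extd.induct)
  case (extd_Hole c B) then show ?case by (auto split: if_splits intro: hole_pos.intros)
next
  case (extd_Lam c a b) then show ?case by (fastforce intro: hole_pos.intros)
next
  case (extd_App c a1 b1 a2 b2) then show ?case by (fastforce intro: hole_pos.intros)
qed auto

lemma D2: "extd T c A B \<Longrightarrow> (p,d,s) \<in> set (diffs A B) \<Longrightarrow> extd T (c+d) r s \<Longrightarrow> extd T c (subst_at p r A) B"
proof (induction arbitrary: p d s rule: extd.induct)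
  case (extd_Hole c B) then show ?case by (auto split: if_splits)
next
  case (extd_Lam c a b) then show ?case by (fastforce intro: extd.intros)
next
  case (extd_App c a1 b1 a2 b2) then show ?case by (fastforce intro: extd.intros)
qed auto

lemma D3: "extd T c A B \<Longrightarrow> diffs A B = [] \<Longrightarrow> A = B"
  by (induction rule: extd.induct) (auto split: if_splits)

lemma D4: "extd T c A B \<Longrightarrow> avars B \<subseteq> avars A \<union> (\<Union>(p,d,s)\<in>set (diffs A B). avars s)"
  by (induction rule: extd.induct) (fastforce split: if_splits)+

lemma extd_avars: "extd T c A B \<Longrightarrow> avars A \<subseteq> avars B"
  by (induction rule: extd.induct) auto

lemma extd_nh: "extd T c A B \<Longrightarrow> nh A \<le> nh B"
  by (induction rule: extd.induct) auto

lemma extd_asize: "extd T c A B \<Longrightarrow> asize A \<le> asize B"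
proof (induction rule: extd.induct)
  case (extd_Hole c B) then show ?case by (cases B) auto
qed auto

lemma nh_subst: "hole_pos A p d \<Longrightarrow> nh (subst_at p r A) = nh A + nh r"
  by (induction rule: hole_pos.induct) auto

lemma D_hole: "extd T c A B \<Longrightarrow> hole_pos A p d \<Longrightarrow> complete B \<Longrightarrow> \<exists>s. (p,d,s) \<in> set (diffs A B)"
proof (induction arbitrary: p d rule: extd.induct)
  case (extd_Hole c B) then show ?case by (auto elim!: hp_HoleE)
next
  case (extd_Lam c a b)
  from extd_Lam.prems(1) obtain p' d' where "p = 0 # p'" "d = Suc d'" "hole_pos a p' d'" by (auto elim: hp_LamE)
  with extd_Lam obtain s where "(p', d', s) \<in> set (diffs a b)" by auto
  then show ?case using \<open>p = 0 # p'\<close> \<open>d = Suc d'\<close> by (intro exI[of _ s]) (simp, rule image_eqI[of _ _ "(p',d',s)"], auto)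
next
  case (extd_App c a1 b1 a2 b2)
  from extd_App.prems(1) have "(\<exists>p'. p = 0#p' \<and> hole_pos a1 p' d) \<or> (\<exists>p'. p = Suc 0 # p' \<and> hole_pos a2 p' d)"
    by (auto elim: hp_AppE)
  then show ?case
  proof (elim disjE exE conjE)
    fix p' assume 1: "p = 0#p'" "hole_pos a1 p' d"
    obtain s where "(p', d, s) \<in> set (diffs a1 b1)" using extd_App.IH(1)[OF 1(2)] extd_App.prems(2) by auto
    then show ?thesis using 1 by (intro exI[of _ s]) (simp, rule disjI1, rule image_eqI[of _ _ "(p',d,s)"], auto)
  next
    fix p' assume 2: "p = Suc 0#p'" "hole_pos a2 p' d"
    obtain s where "(p', d, s) \<in> set (diffs a2 b2)" using extd_App.IH(2)[OF 2(2)] extd_App.prems(2) by auto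
    then show ?thesis using 2 by (intro exI[of _ s]) (simp, rule disjI2, rule image_eqI[of _ _ "(p',d,s)"], auto)
  qed
qed (auto elim: hp_VarE hp_PrimE hp_AVarE)

lemma top_exists: "valid T e s \<Longrightarrow> s \<noteq> Hole \<Longrightarrow>
   \<exists>r. extd T e r s \<and> nh r = 1 \<and>
     (r \<in> {Lam Hole, App Hole Hole} \<union> Var ` {..<e} \<union> Prim ` T \<or> (\<exists>k. r = AVar k \<and> s = AVar k))"
proof (cases s)
  case (Lam b)
  assume "valid T e s"
  then show ?thesis using Lam by (intro exI[of _ "Lam Hole"]) (auto intro!: extd.intros)
next
  case (App b1 b2)
  assume "valid T e s"
  then show ?thesis using App by (intro exI[of _ "App Hole Hole"]) (auto intro!: extd.intros)
qed (auto intro: extd.intros)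

lemma expand_intro: "hole_pos A p d \<Longrightarrow> r \<in> productions T A d \<Longrightarrow> expand T A (subst_at p r A)"
  unfolding expand_def expansions_def by blast

lemma completeness: "extd T 0 A B \<Longrightarrow> newok (avars A) (avars B) \<Longrightarrow> derivable T A B"
proof (induction "nh B - nh A" arbitrary: A rule: less_induct)
  case less
  show ?case
  proof (cases "diffs A B = []")
    case True
    then show ?thesis using D3[OF less(2)] by auto
  next
    case False
    define X where "X = avars A"
    have step: "derivable T A B" if h: "hole_pos A p d" "r \<in> productions T A d"
      "extd T 0 (subst_at p r A) B" "newok (avars (subst_at p r A)) (avars B)" "nh r = 1" for p d r
    proof -
      let ?A' = "subst_at p r A"
      have "nh ?A' = nh A + 1" using nh_subst[OF h(1)] h(5) by simp
      moreover have "nh ?A' \<le> nh B" using extd_nh[OF h(3)] .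
      ultimately have "nh B - nh ?A' < nh B - nh A" by simp
      then have "derivable T ?A' B" using less(1) h(3,4) by blast
      then show ?thesis using expand_intro[OF h(1,2)] by (meson converse_rtranclp_into_rtranclp)
    qed
    show ?thesis
    proof (cases "\<exists>(p,d,s)\<in>set (diffs A B). \<not>(\<exists>k. s = AVar k \<and> k \<notin> X)")
      case True
      then obtain p d s where pds: "(p,d,s) \<in> set (diffs A B)" "\<not>(\<exists>k. s = AVar k \<and> k \<notin> X)" by blast
      from D1[OF less(2) pds(1)] have hp: "hole_pos A p d" "valid T d s" "s \<noteq> Hole" by auto
      from top_exists[OF hp(2,3)] obtain r where r: "extd T d r s" "nh r = 1"
        "r \<in> {Lam Hole, App Hole Hole} \<union> Var ` {..<d} \<union> Prim ` T \<or> (\<exists>k. r = AVar k \<and> s = AVar k)"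
        by blast
      have rp: "r \<in> productions T A d" "avars r \<subseteq> X"
        using r(3) pds(2) unfolding productions_def X_def by auto
      have e: "extd T 0 (subst_at p r A) B" using D2[OF less(2) pds(1)] r(1) by simp
      have "avars (subst_at p r A) = avars A" using avars_subst[OF hp(1)] rp(2) X_def by auto
      then show ?thesis using step[OF hp(1) rp(1) e] r(2) less(3) by simp
    next
      case False
      then have allav: "\<forall>(p,d,s)\<in>set (diffs A B). \<exists>k. s = AVar k \<and> k \<notin> X" by blast
      obtain p0 d0 s0 where p0: "(p0,d0,s0) \<in> set (diffs A B)"
        using \<open>diffs A B \<noteq> []\<close> by (metis list.set_intros(1) neq_Nil_conv prod_cases3)
      then obtain k0 where k0: "s0 = AVar k0" "k0 \<notin> X" using allav by blast
      have hp0: "hole_pos A p0 d0" using D1[OF less(2) p0] by auto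
      have "extd T 0 (subst_at p0 (AVar k0) A) B" using D2[OF less(2) p0] k0 by (auto intro: extd.intros)
      then have "k0 \<in> avars B" using extd_avars avars_subst[OF hp0] by fastforce
      then have fin: "fresh A \<in> avars B" using fresh_in less(3) k0 X_def by blast
      have fX: "fresh A \<notin> X" using fresh_notin X_def by blast
      then obtain p d s where pds: "(p,d,s) \<in> set (diffs A B)" "fresh A \<in> avars s"
        using D4[OF less(2)] fin X_def by blast
      then obtain k where "s = AVar k" using allav by blast
      with pds have sk: "s = AVar (fresh A)" by simp
      have hp: "hole_pos A p d" using D1[OF less(2) pds(1)] by auto
      have rp: "AVar (fresh A) \<in> productions T A d" unfolding productions_def by auto
      have e: "extd T 0 (subst_at p (AVar (fresh A)) A) B" using D2[OF less(2) pds(1)] sk by (auto intro: extd.intros)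
      have "avars (subst_at p (AVar (fresh A)) A) = insert (fresh A) (avars A)"
        using avars_subst[OF hp] by auto
      then show ?thesis using step[OF hp rp e] newok_insert[OF less(3) fin] by simp
    qed
  qed
qed

lemma valid_rename: "valid T d (rename \<sigma> s) = valid T d s"
  by (induction s arbitrary: d) auto

lemma extd_rename: "extd T c A B \<Longrightarrow> extd T c (rename \<sigma> A) (rename \<sigma> B)"
  by (induction rule: extd.induct) (auto intro: extd.intros simp: valid_rename)

lemma rename_fix: "(\<forall>k\<in>avars A. \<sigma> k = k) \<Longrightarrow> rename \<sigma> A = A"
  by (induction A) auto

lemma avars_rename: "avars (rename \<sigma> A) = \<sigma> ` avars A"
  by (induction A) auto

lemma complete_rename: "complete (rename \<sigma> A) = complete A"
  by (induction A) auto

lemma asize_rename: "asize (rename \<sigma> A) = asize A"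
  by (induction A) auto

lemma rename_Hole: "(rename \<sigma> A = Hole) = (A = Hole)"
  by (cases A) auto

lemma diffs_rename: "diffs (rename \<sigma> A) (rename \<sigma> B) = map (\<lambda>(p,d,s). (p,d,rename \<sigma> s)) (diffs A B)"
  by (induction A B rule: diffs.induct) (auto simp: rename_Hole split_def)


lemma commute:
  assumes der: "derivable T A Z" and cZ: "complete Z" and hp: "hole_pos A p d"
  shows "\<exists>r \<sigma>. r \<in> productions T A d \<and> bij \<sigma> \<and> derivable T (subst_at p r A) (rename \<sigma> Z)"
proof -
  define X where "X = avars A"
  define Y where "Y = avars Z"
  from soundness[OF der] have e: "extd T 0 A Z" and nw: "newok X Y" unfolding X_def Y_def by auto
  from D_hole[OF e hp cZ] obtain s where ps: "(p,d,s) \<in> set (diffs A Z)" by blast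
  from D1[OF e ps] have vs: "valid T d s" "s \<noteq> Hole" by auto
  show ?thesis
  proof (cases "\<exists>k. s = AVar k \<and> k \<notin> X")
    case False
    from top_exists[OF vs] obtain r where r: "extd T d r s" "nh r = 1"
        "r \<in> {Lam Hole, App Hole Hole} \<union> Var ` {..<d} \<union> Prim ` T \<or> (\<exists>k. r = AVar k \<and> s = AVar k)"
      by blast
    have rp: "r \<in> productions T A d" "avars r \<subseteq> X"
      using r(3) False unfolding productions_def X_def by auto
    have e2: "extd T 0 (subst_at p r A) Z" using D2[OF e ps] r(1) by simp
    have "avars (subst_at p r A) = X" using avars_subst[OF hp] rp(2) X_def by auto
    then have "derivable T (subst_at p r A) Z" using completeness[OF e2] nw Y_def by simp
    moreover have "rename id Z = Z" by (rule rename_fix) auto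
    ultimately show ?thesis using rp(1) by (intro exI[of _ r] exI[of _ id]) auto
  next
    case True
    then obtain k where k: "s = AVar k" "k \<notin> X" by blast
    define f where "f = fresh A"
    have "extd T 0 (subst_at p (AVar k) A) Z" using D2[OF e ps] k by (auto intro: extd.intros)
    then have kY: "k \<in> Y" using extd_avars avars_subst[OF hp] Y_def by fastforce
    then have fY: "f \<in> Y" using fresh_in nw k X_def f_def by blast
    have fX: "f \<notin> X" using fresh_notin X_def f_def by blast
    define \<sigma> where "\<sigma> = (\<lambda>x::nat. if x = f then k else if x = k then f else x)"
    have ss: "\<sigma> \<circ> \<sigma> = id" unfolding \<sigma>_def by auto
    then have bij: "bij \<sigma>" using o_bij by blast
    have fixA: "rename \<sigma> A = A" using fX k(2) by (intro rename_fix) (auto simp: \<sigma>_def X_def)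
    have e3: "extd T 0 A (rename \<sigma> Z)" using extd_rename[OF e, of \<sigma>] fixA by simp
    have pf: "(p, d, AVar f) \<in> set (diffs A (rename \<sigma> Z))"
      using ps diffs_rename[of \<sigma> A Z] fixA k by (force simp: \<sigma>_def)
    then have e4: "extd T 0 (subst_at p (AVar f) A) (rename \<sigma> Z)"
      using D2[OF e3 pf, of "AVar f"] extd.extd_AVar by auto
    have "\<sigma> ` Y = Y"
    proof
      show "\<sigma> ` Y \<subseteq> Y" using fY kY by (auto simp: \<sigma>_def)
      show "Y \<subseteq> \<sigma> ` Y"
      proof
        fix x assume "x \<in> Y"
        moreover have "x = \<sigma> (\<sigma> x)" using ss by (metis comp_apply id_apply)
        ultimately show "x \<in> \<sigma> ` Y" using fY kY by (auto simp: \<sigma>_def)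
      qed
    qed
    then have aZ: "avars (rename \<sigma> Z) = Y" using avars_rename Y_def by metis
    have "avars (subst_at p (AVar f) A) = insert f X" using avars_subst[OF hp] X_def by auto
    then have "derivable T (subst_at p (AVar f) A) (rename \<sigma> Z)"
      using completeness[OF e4] newok_insert[OF nw fY] aZ by simp
    moreover have "AVar f \<in> productions T A d" unfolding productions_def f_def by auto
    ultimately show ?thesis using bij by blast
  qed
qed

fun lb :: "'p set \<Rightarrow> nat \<Rightarrow> 'p pabs \<Rightarrow> bool" where
  "lb T m (Lam e) = lb T m e"
| "lb T m (App a b) = (lb T m a \<and> lb T m b)"
| "lb T m (Var i) = (i < m)"
| "lb T m (Prim t) = (t \<in> T)"
| "lb T m (AVar k) = (k < m)"
| "lb T m Hole = True"

lemma asize_pos: "asize A \<ge> 1"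
  by (cases A) auto

lemma finite_G: "finite T \<Longrightarrow> finite {A. asize A \<le> n \<and> lb T m A}"
proof (induction n)
  case 0 then show ?case using asize_pos by (metis (no_types, lifting) Collect_empty_eq finite.emptyI le_zero_eq not_one_le_zero)
next
  case (Suc n)
  let ?G = "{A. asize A \<le> n \<and> lb T m A}"
  have "{A. asize A \<le> Suc n \<and> lb T m A} \<subseteq> {Hole} \<union> Var ` {..<m} \<union> AVar ` {..<m} \<union> Prim ` T
     \<union> Lam ` ?G \<union> (\<lambda>(a,b). App a b) ` (?G \<times> ?G)"
  proof
    fix A assume "A \<in> {A. asize A \<le> Suc n \<and> lb T m A}"
    then show "A \<in> {Hole} \<union> Var ` {..<m} \<union> AVar ` {..<m} \<union> Prim ` T
     \<union> Lam ` ?G \<union> (\<lambda>(a,b). App a b) ` (?G \<times> ?G)"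
      by (cases A) auto
  qed
  moreover have "finite ({Hole} \<union> Var ` {..<m} \<union> AVar ` {..<m} \<union> Prim ` T
     \<union> Lam ` ?G \<union> (\<lambda>(a,b). App a b) ` (?G \<times> ?G))" using Suc by auto
  ultimately show ?case by (rule finite_subset)
qed

lemma valid_lb: "valid T d A \<Longrightarrow> (\<forall>k\<in>avars A. k < m) \<Longrightarrow> d + asize A \<le> m \<Longrightarrow> lb T m A"
  by (induction A arbitrary: d) auto

lemma card_avars: "card (avars A) \<le> asize A"
proof (induction A)
  case (App a b)
  then show ?case using card_Un_le[of "avars a" "avars b"] by auto
qed auto

lemma S_sub: "search_space T bound \<subseteq> {A. asize A \<le> bound \<and> lb T bound A}"
proof
  fix A assume "A \<in> search_space T bound"
  then have d: "derivable T Hole A" and s: "asize A \<le> bound" unfolding search_space_def by auto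
  from soundness[OF d] have e: "extd T 0 Hole A" and nw: "newok {} (avars A)" by auto
  from e have v: "valid T 0 A" by (auto elim: extd.cases)
  have "\<forall>k\<in>avars A. k < bound"
  proof
    fix k assume k: "k \<in> avars A"
    have "{..k} \<subseteq> avars A" using nw k unfolding newok_def by (auto simp: le_less)
    then have "card {..k} \<le> card (avars A)" using finite_avars by (rule card_mono[rotated])
    then show "k < bound" using card_avars[of A] s by simp
  qed
  then show "A \<in> {A. asize A \<le> bound \<and> lb T bound A}" using valid_lb[OF v] s by auto
qed


definition opt :: "'p set \<Rightarrow> nat \<Rightarrow> ('p pabs \<Rightarrow> real) \<Rightarrow> 'p pabs \<Rightarrow> bool" where
  "opt T bound U x \<longleftrightarrow> x \<in> search_space T bound \<and> (\<forall>y\<in>search_space T bound. U y \<le> U x)"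

definition Inv :: "'p set \<Rightarrow> nat \<Rightarrow> ('p pabs \<Rightarrow> real) \<Rightarrow> 'p pabs list \<times> 'p pabs option \<Rightarrow> bool" where
  "Inv T bound U st \<longleftrightarrow> (\<forall>A\<in>set (fst st). derivable T Hole A)
     \<and> (\<forall>x. snd st = Some x \<longrightarrow> x \<in> search_space T bound)
     \<and> ((\<exists>x. snd st = Some x \<and> opt T bound U x) \<or> (\<exists>A\<in>set (fst st). \<exists>Z. opt T bound U Z \<and> derivable T A Z))"

lemma complete_derivable: "derivable T A B \<Longrightarrow> complete A \<Longrightarrow> B = A"
  by (induction rule: converse_rtranclp_induct)
     (auto simp: expand_def expansions_def dest: complete_no_hole)

lemma inv_step:
  assumes st: "search_step T bound U s s'" and inv: "Inv T bound U s"
    and ren: "\<forall>\<sigma> A. bij \<sigma> \<longrightarrow> A \<in> search_space T bound \<longrightarrow> rename \<sigma> A \<in> search_space T bound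
            \<longrightarrow> U (rename \<sigma> A) = U A"
  shows "Inv T bound U s'"
  using st
proof cases
  case (expand_step A p d xs b b' Q)
  let ?E = "expansions T A p"
  let ?C = "{A' \<in> ?E. complete A' \<and> asize A' \<le> bound}"
  have dA: "derivable T Hole A" using inv expand_step(1) unfolding Inv_def by auto
  have dE: "derivable T Hole A'" if "A' \<in> ?E" for A'
  proof -
    have "expand T A A'" using that unfolding expand_def by blast
    with dA show ?thesis by (rule rtranclp.rtrancl_into_rtrancl)
  qed
  have bS: "\<forall>x. b = Some x \<longrightarrow> x \<in> search_space T bound" using inv expand_step(1) unfolding Inv_def by auto
  have CS: "?C \<subseteq> search_space T bound" using dE unfolding search_space_def by auto
  from expand_step(6) have best: "(set_option b \<union> ?C = {} \<and> b' = None) \<or>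
      (\<exists>x. b' = Some x \<and> x \<in> set_option b \<union> ?C \<and> (\<forall>y\<in>set_option b \<union> ?C. U y \<le> U x))"
    unfolding is_best_def .
  have b'S: "\<forall>x. b' = Some x \<longrightarrow> x \<in> search_space T bound" using best bS CS by auto
  have good: "\<exists>x. b' = Some x \<and> opt T bound U x" if "y \<in> set_option b \<union> ?C" "opt T bound U y" for y
  proof -
    from best that obtain x where x: "b' = Some x" "x \<in> set_option b \<union> ?C" "U y \<le> U x" by auto
    have "x \<in> search_space T bound" using x(2) bS CS by auto
    then show ?thesis using x that(2) unfolding opt_def by force
  qed
  have Q': "\<forall>A'\<in>set (Q @ xs). derivable T Hole A'" using inv expand_step(1,5) dE unfolding Inv_def by auto
  have "(\<exists>x. b' = Some x \<and> opt T bound U x) \<or> (\<exists>A'\<in>set (Q @ xs). \<exists>Z. opt T bound U Z \<and> derivable T A' Z)"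
  proof -
    have "(\<exists>x. b = Some x \<and> opt T bound U x) \<or> (\<exists>A'\<in>set (A # Q). \<exists>Z. opt T bound U Z \<and> derivable T A' Z)"
      using inv expand_step(1) unfolding Inv_def by auto
    then show ?thesis
    proof (elim disjE)
      assume "\<exists>x. b = Some x \<and> opt T bound U x"
      then show ?thesis using good by auto
    next
      assume "\<exists>A'\<in>set (A # Q). \<exists>Z. opt T bound U Z \<and> derivable T A' Z"
      then obtain A0 Z where A0: "A0 \<in> set (A # Q)" "opt T bound U Z" "derivable T A0 Z" by blast
      show ?thesis
      proof (cases "A0 = A")
        case False
        then show ?thesis using A0 by auto
      next
        case True
        have ZS: "Z \<in> search_space T bound" using A0(2) unfolding opt_def by auto
        then have cZ: "complete Z" and sZ: "asize Z \<le> bound" unfolding search_space_def by auto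
        from commute[OF A0(3)[unfolded True] cZ expand_step(3)] obtain r \<sigma> where
          r: "r \<in> productions T A d" "bij \<sigma>" "derivable T (subst_at p r A) (rename \<sigma> Z)" by blast
        let ?A' = "subst_at p r A"
        let ?Z' = "rename \<sigma> Z"
        have A'E: "?A' \<in> ?E" unfolding expansions_def using expand_step(3) r(1) by blast
        have "derivable T Hole ?Z'" using dE[OF A'E] r(3) by (rule rtranclp_trans)
        then have Z'S: "?Z' \<in> search_space T bound"
          using cZ sZ unfolding search_space_def by (simp add: complete_rename asize_rename)
        have "U ?Z' = U Z" using ren r(2) ZS Z'S by blast
        then have optZ': "opt T bound U ?Z'" using A0(2) Z'S unfolding opt_def by simp
        have sA': "asize ?A' \<le> bound"
          using extd_asize[OF conjunct1[OF soundness[OF r(3)]]] sZ asize_rename[of \<sigma> Z] by simp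
        show ?thesis
        proof (cases "complete ?A'")
          case True
          then have "?Z' = ?A'" using complete_derivable r(3) by blast
          then have "?Z' \<in> ?C" using A'E True sA' by auto
          then show ?thesis using good optZ' by blast
        next
          case False
          then have "?A' \<in> set xs" using expand_step(5) A'E sA' by auto
          then show ?thesis using optZ' r(3) by auto
        qed
      qed
    qed
  qed
  then show ?thesis using Q' b'S expand_step(2) unfolding Inv_def by auto
next
  case (prune_step B A Q b)
  have "(\<exists>x. b = Some x \<and> opt T bound U x) \<or> (\<exists>A'\<in>set (A # Q). \<exists>Z. opt T bound U Z \<and> derivable T A' Z)"
    using inv prune_step(1) unfolding Inv_def by auto
  moreover have "\<not> (opt T bound U Z \<and> derivable T A Z)" for Z
  proof
    assume h: "opt T bound U Z \<and> derivable T A Z"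
    then have "Z \<in> search_space T bound" unfolding opt_def by auto
    with prune_step(3) h obtain A'' where "A'' \<in> search_space T bound" "U A'' > U Z"
      unfolding strictly_dominates_def covers_def by blast
    then show False using h unfolding opt_def by force
  qed
  ultimately have "(\<exists>x. b = Some x \<and> opt T bound U x) \<or> (\<exists>A'\<in>set Q. \<exists>Z. opt T bound U Z \<and> derivable T A' Z)"
    by auto
  then show ?thesis using inv prune_step(1,2) unfolding Inv_def by auto
qed

theorem lemma3p1:
  fixes T :: "'p set" and P :: "'p prog set" and U :: "'p pabs \<Rightarrow> real"
    and bound :: nat and best :: "'p pabs option"
  assumes "finite T"
    and "finite P" and "P \<noteq> {}"
    and "\<forall>e \<in> P. prog_closed_at 0 e \<and> prog_prims e \<subseteq> T"
    and "bound = Max (prog_size ` P)"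
    and "\<forall>\<sigma> A. bij \<sigma> \<longrightarrow> A \<in> search_space T bound \<longrightarrow> rename \<sigma> A \<in> search_space T bound
            \<longrightarrow> U (rename \<sigma> A) = U A"
    and "(search_step T bound U)\<^sup>*\<^sup>* ([Hole], None) ([], best)"
  shows "\<exists>Astar. best = Some Astar \<and> Astar \<in> search_space T bound
           \<and> (\<forall>A \<in> search_space T bound. U Astar \<ge> U A)"
proof -
  let ?S = "search_space T bound"
  have fin: "finite ?S" using finite_subset[OF S_sub finite_G[OF assms(1)]] .
  obtain e where eP: "e \<in> P" using assms(3) by blast
  have "prog_size e \<ge> 1" by (cases e) auto
  then have b1: "bound \<ge> 1" using assms(2,5) eP by (metis Max_ge finite_imageI image_eqI le_trans)
  have "fresh (Hole :: 'p pabs) = 0" unfolding fresh_def by simp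
  then have "AVar 0 \<in> productions T (Hole :: 'p pabs) 0" unfolding productions_def by auto
  then have "expand T Hole (subst_at [] (AVar 0) Hole)" by (rule expand_intro[OF hole_pos.intros(1)])
  then have "derivable T Hole (AVar 0)" by auto
  then have "AVar 0 \<in> ?S" unfolding search_space_def using b1 by auto
  then have ne: "?S \<noteq> {}" by blast
  define M where "M = Max (U ` ?S)"
  have "M \<in> U ` ?S" unfolding M_def using fin ne by auto
  then obtain Z where Z: "Z \<in> ?S" "U Z = M" by blast
  have "opt T bound U Z" unfolding opt_def using Z fin M_def by auto
  then have inv0: "Inv T bound U ([Hole], None)" unfolding Inv_def search_space_def opt_def by auto
  have "Inv T bound U ([], best)"
    using assms(7) inv0
  proof (induction rule: rtranclp_induct)
    case base then show ?case .
  next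
    case (step y z) then show ?case using inv_step assms(6) by blast
  qed
  then show ?thesis unfolding Inv_def opt_def by auto
qed

end
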